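(* For $n,m\in\mathbb{N}_0$, $$\int_0^{\pi/2}x^n\sin^{2m}(x)\,dx=\frac{1}{4^m}\Big(\frac{\pi}{2}\Big)^n\Bigg(\frac{\pi\binom{2m}{m}}{2(n+1)}-n!\sum_{k=1}^{\infty}\binom{2m}{m+k}\bigg(\sum_{j=1}^{\lfloor (n+1)/2\rfloor}\frac{(-1)^j}{\pi^{2j-1}k^{2j}(n+1-2j)!}-\delta_{\lfloor \frac{n+1}{2}\rfloor,\frac{n+1}{2}}\frac{(-1)^k(-1)^{\lfloor (n+1)/2\rfloor}}{\pi^n k^{n+1}}\bigg)\Bigg).$$
   Context: $\delta_{a,b}$ is the Kronecker delta, so $\delta_{\lfloor \frac{n+1}{2}\rfloor,\frac{n+1}{2}}$ is $1$ if $n$ is odd and $0$ if $n$ is even. $\binom{2m}{m+k}=0$ for integers $k>m$. An empty sum is $0$. *)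

theory Defs
  imports "HOL-Analysis.Analysis"
begin

end

theory Submission imports Defs begin

lemma sin_even_half: "sin (real (2*q) * pi / 2) = 0"
proof -
  have "real (2*q) * pi / 2 = real q * pi" by simp
  then show ?thesis by simp
qed

lemma sin_odd_half: "sin (real (2*q+1) * pi / 2) = (-1)^q"
proof -
  have "real (2*q+1) * pi / 2 = real q * pi + pi/2" by (simp add: field_simps)
  then show ?thesis by (simp only: sin_add) simp
qed

lemma sum_sin_half:
  fixes g :: "nat \<Rightarrow> real"
  shows "(\<Sum>r\<le>n. g r * sin (real r * pi / 2)) = - (\<Sum>j=1..(n+1) div 2. g (2*j-1) * (-1)^j)"
proof (induction n)
  case 0
  then show ?case by simp
next
  case (Suc n)
  show ?case
  proof (cases "even n")
    case True
    then obtain q where q: "n = 2*q" by blast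
    have e1: "(Suc n + 1) div 2 = Suc q" using q by simp
    have e2: "(n+1) div 2 = q" using q by simp
    have s: "sin (real (Suc n) * pi / 2) = (-1)^q" using sin_odd_half[of q] q by simp
    have "(\<Sum>j=1..Suc q. g (2*j-1) * (-1)^j) = (\<Sum>j=1..q. g (2*j-1) * (-1)^j) + g (Suc n) * (-1)^Suc q"
      using q by (simp add: sum.atLeast1_atMost_eq)
    then show ?thesis using Suc.IH e1 e2 s by simp
  next
    case False
    then obtain q where q: "n = 2*q+1" using oddE by blast
    have e1: "(Suc n + 1) div 2 = (n+1) div 2" using q by simp
    have s: "sin (real (Suc n) * pi / 2) = 0" using sin_even_half[of "Suc q"] q by simp
    show ?thesis using Suc.IH e1 s by simp
  qed
qed

fun G :: "real \<Rightarrow> nat \<Rightarrow> real \<Rightarrow> real \<Rightarrow> real" where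
  "G b 0 \<phi> x = sin (b*x+\<phi>) / b"
| "G b (Suc n) \<phi> x = x^Suc n * sin (b*x+\<phi>) / b - real (Suc n) / b * G b n (\<phi> - pi/2) x"

lemma G_deriv:
  assumes "b \<noteq> 0"
  shows "(G b n \<phi> has_real_derivative x^n * cos (b*x+\<phi>)) (at x)"
proof (induction n arbitrary: \<phi>)
  case 0
  show ?case using assms
    by (auto intro!: derivative_eq_intros)
next
  case (Suc n)
  have c: "cos (b*x + (\<phi> - pi/2)) = sin (b*x+\<phi>)"
  proof -
    have "b*x + (\<phi> - pi/2) = (b*x+\<phi>) - pi/2" by simp
    then show ?thesis by (simp only: cos_diff) simp
  qed
  have p: "x * x^(n - Suc 0) = x^n" if "0<n" for n by (metis Suc_pred power_Suc that)
  have d: "(G b (Suc n) \<phi> has_real_derivative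
     (real (Suc n) * x^n * sin (b*x+\<phi>) / b + x^Suc n * cos (b*x+\<phi>)) - real (Suc n) / b * (x^n * cos (b*x + (\<phi> - pi/2)))) (at x)"
    unfolding G.simps using assms p
    by (auto intro!: derivative_eq_intros Suc.IH simp: field_simps)
  have e: "(real (Suc n) * x^n * sin (b*x+\<phi>) / b + x^Suc n * cos (b*x+\<phi>)) - real (Suc n) / b * (x^n * cos (b*x + (\<phi> - pi/2)))
     = x^Suc n * cos (b*x+\<phi>)" unfolding c by (simp add: field_simps)
  show ?case using d unfolding e .
qed

lemma G_closed:
  "G b n \<phi> x = (\<Sum>r\<le>n. (-1)^r * (fact n / fact (n-r)) * x^(n-r) * sin (b*x+\<phi> - real r*pi/2) / b^(r+1))"
proof (induction n arbitrary: \<phi>)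
  case 0
  then show ?case by simp
next
  case (Suc n)
  have "(\<Sum>r\<le>Suc n. (-1)^r * (fact (Suc n) / fact (Suc n-r)) * x^(Suc n-r) * sin (b*x+\<phi> - real r*pi/2) / b^(r+1))
     = x^Suc n * sin (b*x+\<phi>) / b + (\<Sum>r\<le>n. (-1)^(Suc r) * (fact (Suc n) / fact (n-r)) * x^(n-r) * sin (b*x+\<phi> - real (Suc r)*pi/2) / b^(Suc r+1))"
    by (subst sum.atMost_Suc_shift) simp
  also have "(\<Sum>r\<le>n. (-1)^(Suc r) * (fact (Suc n) / fact (n-r)) * x^(n-r) * sin (b*x+\<phi> - real (Suc r)*pi/2) / b^(Suc r+1))
     = - (real (Suc n) / b) * (\<Sum>r\<le>n. (-1)^r * (fact n / fact (n-r)) * x^(n-r) * sin (b*x+(\<phi>-pi/2) - real r*pi/2) / b^(r+1))"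
    unfolding sum_distrib_left
  proof (rule sum.cong)
    fix r assume "r \<in> {..n}"
    have a: "b*x+\<phi> - real (Suc r)*pi/2 = b*x+(\<phi>-pi/2) - real r*pi/2" by (simp add: field_simps)
    show "(-1)^(Suc r) * (fact (Suc n) / fact (n-r)) * x^(n-r) * sin (b*x+\<phi> - real (Suc r)*pi/2) / b^(Suc r+1)
      = - (real (Suc n) / b) * ((-1)^r * (fact n / fact (n-r)) * x^(n-r) * sin (b*x+(\<phi>-pi/2) - real r*pi/2) / b^(r+1))"
      unfolding a by (simp add: field_simps del: sin_add sin_diff) (simp add: add_divide_distrib diff_divide_distrib)
  qed simp
  finally show ?case using Suc.IH[of "\<phi> - pi/2"] by simp
qed

lemma sin_pow_complex:
  "(-4)^m * sin x ^ (2*m) = (\<Sum>l\<le>2*m. real (2*m choose l) * (-1)^l * cos ((real (2*m) - 2*real l) * x))"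
proof -
  have h1: "complex_of_real (2 * sin x) * \<i> = cis x + (- cis (-x))"
    by (simp add: complex_eq_iff)
  have h2: "(complex_of_real (2 * sin x) * \<i>)^(2*m) = complex_of_real ((-4)^m * sin x ^ (2*m))"
  proof -
    have "(complex_of_real (2 * sin x) * \<i>)^(2*m) = ((complex_of_real (2 * sin x) * \<i>)^2)^m"
      by (simp add: power_mult)
    also have "(complex_of_real (2 * sin x) * \<i>)^2 = complex_of_real (-4 * sin x ^ 2)"
      by (simp add: power_mult_distrib)
    also have "(complex_of_real (-4 * sin x ^ 2))^m = complex_of_real ((-4)^m * sin x ^ (2*m))"
      unfolding of_real_power[symmetric] by (subst power_mult_distrib) (simp add: power_mult)
    finally show ?thesis .
  qed
  have h3: "(cis x + (- cis (-x)))^(2*m) = (\<Sum>l\<le>2*m. of_nat (2*m choose l) * (- cis (-x))^l * (cis x)^(2*m-l))"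
    by (subst add.commute) (rule binomial_ring)
  have h4: "of_nat (2*m choose l) * (- cis (-x))^l * (cis x)^(2*m-l)
      = complex_of_real (real (2*m choose l) * (-1)^l) * cis ((real (2*m) - 2*real l) * x)" if "l \<le> 2*m" for l
  proof -
    have e1: "(- cis (-x))^l = (-1)^l * cis (real l * (-x))" by (metis power_minus Complex.DeMoivre)
    have e2: "(cis x)^(2*m-l) = cis (real (2*m-l) * x)" by (rule Complex.DeMoivre)
    have arg: "real l * (-x) + real (2*m-l) * x = (real (2*m) - 2*real l) * x"
      using that by (simp add: of_nat_diff algebra_simps)
    have e3: "cis (real l * (-x)) * cis (real (2*m-l) * x) = cis ((real (2*m) - 2*real l) * x)"
      by (simp only: cis_mult arg)
    have "of_nat (2*m choose l) * (- cis (-x))^l * (cis x)^(2*m-l)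
       = (of_nat (2*m choose l) * (-1)^l) * (cis (real l * (-x)) * cis (real (2*m-l) * x))"
      unfolding e1 e2 by (simp only: mult_ac)
    also have "\<dots> = (of_nat (2*m choose l) * (-1)^l) * cis ((real (2*m) - 2*real l) * x)"
      by (simp only: e3)
    finally show ?thesis by simp
  qed
  have "complex_of_real ((-4)^m * sin x ^ (2*m)) = (\<Sum>l\<le>2*m. complex_of_real (real (2*m choose l) * (-1)^l) * cis ((real (2*m) - 2*real l) * x))"
    unfolding h2[symmetric] h1 h3 by (rule sum.cong) (simp_all add: h4)
  then have "Re (complex_of_real ((-4)^m * sin x ^ (2*m))) = Re (\<Sum>l\<le>2*m. complex_of_real (real (2*m choose l) * (-1)^l) * cis ((real (2*m) - 2*real l) * x))"
    by (rule arg_cong)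
  then show ?thesis by (simp add: Re_sum)
qed

lemma sin_pow_red:
  "4^m * sin x ^ (2*m) = real (2*m choose m) + 2 * (\<Sum>i<m. (-1)^(Suc i) * real (2*m choose (m+Suc i)) * cos (2*real (Suc i)*x))"
proof -
  define f where "f l = real (2*m choose l) * (-1)^l * cos ((real (2*m) - 2*real l) * x)" for l
  have split: "{..2*m} = {..<m} \<union> {m..2*m}" by auto
  have s1: "(\<Sum>l\<le>2*m. f l) = (\<Sum>l<m. f l) + (\<Sum>l=m..2*m. f l)"
    unfolding split by (rule sum.union_disjoint) auto
  have s2: "(\<Sum>l=m..2*m. f l) = f m + (\<Sum>i<m. f (m + Suc i))"
  proof -
    have "(\<Sum>l=m..2*m. f l) = (\<Sum>l=0+m..m+m. f l)" by (simp add: mult_2)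
    also have "\<dots> = (\<Sum>k=0..m. f (k+m))" by (rule sum.shift_bounds_cl_nat_ivl)
    also have "\<dots> = (\<Sum>k\<le>m. f (m+k))" by (simp add: atLeast0AtMost add.commute)
    also have "\<dots> = f m + (\<Sum>i<m. f (m + Suc i))" by (subst sum.atMost_shift) simp
    finally show ?thesis .
  qed
  have s3: "(\<Sum>l<m. f l) = (\<Sum>i<m. f (m - Suc i))" by (rule sum.nat_diff_reindex[symmetric])
  have t1: "f (m + Suc i) = (-1)^m * ((-1)^(Suc i) * real (2*m choose (m+Suc i)) * cos (2*real (Suc i)*x))" for i
  proof -
    have "(real (2*m) - 2*real (m + Suc i)) * x = - (2*real (Suc i)*x)" by (simp add: algebra_simps)
    then show ?thesis unfolding f_def by (simp add: power_add)
  qed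
  have t2: "f (m - Suc i) = f (m + Suc i)" if "i < m" for i
  proof -
    have c: "2*m choose (m - Suc i) = 2*m choose (m + Suc i)"
      using binomial_symmetric[of "m - Suc i" "2*m"] that by (simp add: mult_2)
    have p: "(-1::real)^(m - Suc i) = (-1)^(m + Suc i)"
    proof -
      have "m + Suc i = (m - Suc i) + 2 * Suc i" using that by simp
      then show ?thesis by (simp only: power_add power_mult) simp
    qed
    have a1: "(real (2*m) - 2*real (m - Suc i)) * x = 2*real (Suc i)*x" using that by (simp add: of_nat_diff algebra_simps)
    have a2: "(real (2*m) - 2*real (m + Suc i)) * x = - (2*real (Suc i)*x)" by (simp add: algebra_simps)
    show ?thesis unfolding f_def c p a1 a2 by simp
  qed
  have "(\<Sum>i<m. f (m - Suc i)) = (\<Sum>i<m. f (m + Suc i))" using t2 by simp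
  then have "(\<Sum>l\<le>2*m. f l) = f m + 2 * (\<Sum>i<m. f (m + Suc i))" using s1 s2 s3 by simp
  also have "\<dots> = (-1)^m * (real (2*m choose m) + 2 * (\<Sum>i<m. (-1)^(Suc i) * real (2*m choose (m+Suc i)) * cos (2*real (Suc i)*x)))"
    unfolding t1 by (simp add: f_def sum_distrib_left algebra_simps)
  finally have "(-4)^m * sin x ^ (2*m) = (-1)^m * (real (2*m choose m) + 2 * (\<Sum>i<m. (-1)^(Suc i) * real (2*m choose (m+Suc i)) * cos (2*real (Suc i)*x)))"
    using sin_pow_complex[of m x] unfolding f_def by simp
  moreover have "(-4::real)^m = (-1)^m * 4^m" by (simp add: power_mult_distrib[symmetric])
  ultimately show ?thesis by simp
qed

lemma G_zero: "G b n 0 0 = (-1)^n * fact n * sin (- (real n * pi/2)) / b^(n+1)"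
proof -
  have ins: "{..n} = insert n {..<n}" by auto
  have "G b n 0 0 = (\<Sum>r\<in>insert n {..<n}. (-1)^r * (fact n / fact (n-r)) * 0^(n-r) * sin (b*0+0 - real r*pi/2) / b^(r+1))"
    unfolding G_closed by (simp add: ins)
  also have "\<dots> = (-1)^n * (fact n / fact (n-n)) * 0^(n-n) * sin (b*0+0 - real n*pi/2) / b^(n+1)"
    by (subst sum.insert) (auto simp: power_0_left)
  finally show ?thesis by simp
qed

lemma sin_kpi_minus: "sin (real k * pi - (y::real)) = - ((-1)^k * sin y)"
  by (simp add: sin_diff)

lemma G_half:
  "G (2*real k) n 0 (pi/2) = (-1)^k * (\<Sum>j=1..(n+1) div 2. - (fact n / fact (n+1-2*j)) * (pi/2)^(n+1-2*j) / (2*real k)^(2*j) * (-1)^j)"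
proof -
  define g where "g r = (-1)^r * (fact n / fact (n-r)) * (pi/2)^(n-r) / (2*real k)^(r+1)" for r
  have "G (2*real k) n 0 (pi/2) = (\<Sum>r\<le>n. g r * ((-1)^Suc k * sin (real r * pi / 2)))"
    unfolding G_closed
  proof (rule sum.cong)
    fix r assume "r \<in> {..n}"
    have "2 * real k * (pi / 2) + 0 - real r * pi / 2 = real k * pi - real r * pi / 2" by simp
    then show "(-1)^r * (fact n / fact (n-r)) * (pi/2)^(n-r) * sin (2 * real k * (pi / 2) + 0 - real r * pi / 2) / (2 * real k)^(r+1)
      = g r * ((-1)^Suc k * sin (real r * pi / 2))"
      unfolding g_def by (simp only: sin_kpi_minus) simp
  qed simp
  also have "\<dots> = (-1)^Suc k * (\<Sum>r\<le>n. g r * sin (real r * pi / 2))"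
    by (simp add: sum_distrib_left mult_ac)
  also have "\<dots> = (-1)^k * (\<Sum>j=1..(n+1) div 2. g (2*j-1) * (-1)^j)"
    by (simp add: sum_sin_half)
  also have "(\<Sum>j=1..(n+1) div 2. g (2*j-1) * (-1)^j) = (\<Sum>j=1..(n+1) div 2. - (fact n / fact (n+1-2*j)) * (pi/2)^(n+1-2*j) / (2*real k)^(2*j) * (-1)^j)"
  proof (rule sum.cong)
    fix j assume "j \<in> {1..(n+1) div 2}"
    then have j: "1 \<le> j" "2*j \<le> n+1" by auto
    have a: "n - (2*j-1) = n+1-2*j" "2*j-1+1 = 2*j" using j by auto
    have b: "(-1::real)^(2*j-1) = -1"
    proof -
      obtain jj where "j = Suc jj" using j by (cases j) auto
      then have "2*j-1 = 2*jj+1" by simp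
      then show ?thesis by simp
    qed
    show "g (2*j-1) * (-1)^j = - (fact n / fact (n+1-2*j)) * (pi/2)^(n+1-2*j) / (2*real k)^(2*j) * (-1)^j"
      unfolding g_def a b by simp
  qed simp
  finally show ?thesis .
qed

lemma val_j:
  fixes k n j :: nat
  assumes k: "k \<ge> 1" and j: "1 \<le> j" "2*j \<le> n+1"
  shows "2 * (- (fact n / fact (n+1-2*j)) * (pi/2)^(n+1-2*j) / (2*real k)^(2*j) * (-1)^j)
     = -((pi/2)^n) * fact n * ((-1)^j / (pi^(2*j-1) * real k^(2*j) * fact (n+1-2*j)))"
proof -
  define a where "a = n+1-2*j"
  define c where "c = 2*j-1"
  have n: "n = a + c" and jj: "2*j = Suc c" using j unfolding a_def c_def by auto
  have kp: "real k > 0" using k by simp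
  show ?thesis unfolding a_def[symmetric] c_def[symmetric] jj unfolding n
    using kp by (simp add: power_add power_mult_distrib power_divide field_simps)
qed

lemma val_0:
  fixes k n :: nat
  assumes k: "k \<ge> 1"
  shows "- 2 * (-1)^k * G (2*real k) n 0 0 =
    (pi/2)^n * fact n * ((if real ((n+1) div 2) = real (n+1) / 2 then 1 else 0) *
             ((-1)^k * (-1)^((n+1) div 2) / (pi^n * real k^(n+1))))"
proof (cases "even n")
  case True
  then obtain q where q: "n = 2*q" by blast
  have "sin (- (real n * pi/2)) = 0" using sin_even_half[of q] q by simp
  moreover have "real ((n+1) div 2) \<noteq> real (n+1) / 2" using q by simp
  ultimately show ?thesis unfolding G_zero by simp
next
  case False
  then obtain q where q: "n = 2*q+1" using oddE by blast
  have s: "sin (- (real n * pi/2)) = -((-1)^q)" using sin_odd_half[of q] q by simp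
  have d: "real ((n+1) div 2) = real (n+1) / 2" "(n+1) div 2 = Suc q" using q by simp_all
  have kp: "real k > 0" using k by simp
  show ?thesis unfolding G_zero s d using kp q
    by (simp add: power_add power_mult_distrib power_divide field_simps)
qed

definition Tk :: "nat \<Rightarrow> nat \<Rightarrow> real" where
  "Tk n k = (\<Sum>j=1..(n+1) div 2.
              (-1) ^ j / (pi ^ (2*j-1) * real k ^ (2*j) * fact (n+1-2*j)))
           - (if real ((n+1) div 2) = real (n+1) / 2 then 1 else 0) *
             ((-1) ^ k * (-1) ^ ((n+1) div 2) / (pi ^ n * real k ^ (n+1)))"

lemma val_k:
  fixes k n :: nat
  assumes k: "k \<ge> 1"
  shows "2 * (-1)^k * (G (2*real k) n 0 (pi/2) - G (2*real k) n 0 0) = -((pi/2)^n) * fact n * Tk n k"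
proof -
  have "2 * (-1)^k * G (2*real k) n 0 (pi/2)
     = (\<Sum>j=1..(n+1) div 2. 2 * (- (fact n / fact (n+1-2*j)) * (pi/2)^(n+1-2*j) / (2*real k)^(2*j) * (-1)^j))"
    unfolding G_half by (simp add: sum_distrib_left mult_ac)
  also have "\<dots> = (\<Sum>j=1..(n+1) div 2. -((pi/2)^n) * fact n * ((-1)^j / (pi^(2*j-1) * real k^(2*j) * fact (n+1-2*j))))"
  proof (rule sum.cong)
    fix j assume "j \<in> {1..(n+1) div 2}"
    then show "2 * (- (fact n / fact (n+1-2*j)) * (pi/2)^(n+1-2*j) / (2*real k)^(2*j) * (-1)^j) =
      -((pi/2)^n) * fact n * ((-1)^j / (pi^(2*j-1) * real k^(2*j) * fact (n+1-2*j)))"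
      by (intro val_j) (use k in auto)
  qed simp
  finally have h: "2 * (-1)^k * G (2*real k) n 0 (pi/2) = -((pi/2)^n) * fact n * (\<Sum>j=1..(n+1) div 2. (-1)^j / (pi^(2*j-1) * real k^(2*j) * fact (n+1-2*j)))"
    by (simp add: sum_distrib_left)
  have "2 * (-1)^k * (G (2*real k) n 0 (pi/2) - G (2*real k) n 0 0)
     = 2 * (-1)^k * G (2*real k) n 0 (pi/2) + (- 2 * (-1)^k * G (2*real k) n 0 0)"
    by (simp add: algebra_simps)
  also have "\<dots> = -((pi/2)^n) * fact n * Tk n k"
    unfolding h val_0[OF k] Tk_def by (simp add: algebra_simps)
  finally show ?thesis .
qed

lemma int_cos:
  fixes k n :: nat
  assumes k: "k \<ge> 1"
  shows "((\<lambda>x. x^n * cos (2*real k*x)) has_integral (G (2*real k) n 0 (pi/2) - G (2*real k) n 0 0)) {0..pi/2}"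
proof -
  have b: "2*real k \<noteq> 0" using k by simp
  have d: "(G (2*real k) n 0 has_real_derivative x^n * cos (2*real k*x)) (at x)" for x
    using G_deriv[OF b, of n 0 x] by simp
  show ?thesis
    by (rule fundamental_theorem_of_calculus)
      (auto intro!: has_field_derivative_at_within d
        simp: has_real_derivative_iff_has_vector_derivative[symmetric])
qed

lemma int_pow:
  fixes n :: nat
  shows "((\<lambda>x. x^n) has_integral ((pi/2)^(n+1) / real (n+1))) {0..pi/2}"
proof -
  have d: "((\<lambda>x. x^(n+1) / real (n+1)) has_real_derivative x^n) (at x within {0..pi/2})" for x :: real
    using DERIV_cdivide[OF DERIV_pow[of "n+1" x "{0..pi/2}"], of "real (n+1)"] by simp
  have "((\<lambda>x. x^n) has_integral ((\<lambda>x. x^(n+1) / real (n+1)) (pi/2) - (\<lambda>x. x^(n+1) / real (n+1)) 0)) {0..pi/2}"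
    by (rule fundamental_theorem_of_calculus)
      (simp_all add: has_real_derivative_iff_has_vector_derivative[symmetric] d[simplified])
  then show ?thesis by simp
qed

theorem theorem2:
  fixes n m :: nat
  shows "integral {0..pi/2} (\<lambda>x. x ^ n * (sin x) ^ (2*m)) =
    1 / 4 ^ m * (pi/2) ^ n *
    (pi * real ((2*m) choose m) / (2 * real (n+1))
     - fact n * (\<Sum>i. let k = Suc i in
          real ((2*m) choose (m+k)) *
          ((\<Sum>j=1..(n+1) div 2.
              (-1) ^ j / (pi ^ (2*j-1) * real k ^ (2*j) * fact (n+1-2*j)))
           - (if real ((n+1) div 2) = real (n+1) / 2 then 1 else 0) *
             ((-1) ^ k * (-1) ^ ((n+1) div 2) / (pi ^ n * real k ^ (n+1))))))"
proof -
  define C where "C = real ((2*m) choose m)"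
  define Ci where "Ci i = real ((2*m) choose (m + Suc i))" for i
  define V where "V i = G (2*real (Suc i)) n 0 (pi/2) - G (2*real (Suc i)) n 0 0" for i
  have feq: "x ^ n * (sin x) ^ (2*m) = 1/4^m * (C * x^n + (\<Sum>i<m. (2*(-1)^Suc i * Ci i) * (x^n * cos (2*real (Suc i)*x))))" for x
  proof -
    have "sin x ^ (2*m) = 1/4^m * (4^m * sin x ^ (2*m))" by simp
    also have "\<dots> = 1/4^m * (C + 2 * (\<Sum>i<m. (-1)^(Suc i) * Ci i * cos (2*real (Suc i)*x)))"
      unfolding sin_pow_red C_def Ci_def ..
    finally show ?thesis by (simp add: sum_distrib_left sum_distrib_right algebra_simps)
  qed
  have hi: "((\<lambda>x. 1/4^m * (C * x^n + (\<Sum>i<m. (2*(-1)^Suc i * Ci i) * (x^n * cos (2*real (Suc i)*x)))))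
     has_integral (1/4^m * (C * ((pi/2)^(n+1) / real (n+1)) + (\<Sum>i<m. (2*(-1)^Suc i * Ci i) * V i)))) {0..pi/2}"
    unfolding V_def
    by (intro has_integral_mult_right has_integral_add has_integral_sum int_pow int_cos) auto
  have int: "integral {0..pi/2} (\<lambda>x. x ^ n * (sin x) ^ (2*m)) =
      1/4^m * (C * ((pi/2)^(n+1) / real (n+1)) + (\<Sum>i<m. (2*(-1)^Suc i * Ci i) * V i))"
    unfolding feq using hi by (rule integral_unique)
  have vs: "(\<Sum>i<m. (2*(-1)^Suc i * Ci i) * V i) = -((pi/2)^n) * fact n * (\<Sum>i<m. Ci i * Tk n (Suc i))"
  proof -
    have "(\<Sum>i<m. (2*(-1)^Suc i * Ci i) * V i) = (\<Sum>i<m. Ci i * (-((pi/2)^n) * fact n * Tk n (Suc i)))"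
    proof (rule sum.cong)
      fix i
      have "2 * (-1)^(Suc i) * V i = -((pi/2)^n) * fact n * Tk n (Suc i)"
        unfolding V_def using val_k[of "Suc i" n] by simp
      then show "(2*(-1)^Suc i * Ci i) * V i = Ci i * (-((pi/2)^n) * fact n * Tk n (Suc i))"
        by (simp add: algebra_simps)
    qed simp
    then show ?thesis by (simp add: sum_distrib_left algebra_simps)
  qed
  have sinf: "(\<Sum>i. let k = Suc i in
          real ((2*m) choose (m+k)) *
          ((\<Sum>j=1..(n+1) div 2.
              (-1) ^ j / (pi ^ (2*j-1) * real k ^ (2*j) * fact (n+1-2*j)))
           - (if real ((n+1) div 2) = real (n+1) / 2 then 1 else 0) *
             ((-1) ^ k * (-1) ^ ((n+1) div 2) / (pi ^ n * real k ^ (n+1)))))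
      = (\<Sum>i<m. Ci i * Tk n (Suc i))"
    unfolding Let_def Tk_def[symmetric] Ci_def
    by (rule suminf_finite) auto
  have pp: "(pi/2)^(n+1) = (pi/2)^n * (pi/2)" by simp
  have fin: "1/4^m * (C * ((pi/2)^n * (pi/2) / real (n+1)) + -((pi/2)^n) * fact n * S)
     = 1/4^m * (pi/2)^n * (pi * C / (2 * real (n+1)) - fact n * S)" for S :: real
    by (simp add: divide_simps) (simp add: algebra_simps)
  show ?thesis unfolding int sinf vs C_def[symmetric] pp fin ..
qed

end
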